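(* Assume the standing assumptions (A), a quadrature rule and grid as below, and let $\rho_0:\mathbb{R}\to[0,\rho_{\max}]$ be such that the initial cell averages are $\bar\rho_j(0)=\sum_{\nu=1}^R\gamma_\nu\rho_0(x_{j-1/2}+hy_\nu)$; set $\rho_m=\inf_{\mathbb{R}}\rho_0$, $\rho_M=\sup_{\mathbb{R}}\rho_0$. Suppose the reconstruction used at every stage has the property (R) below, and let the semi-discrete operator $L$ be defined by $L(\bar\rho)_j=-\frac1h\big(V_{j+1/2}g(\rho^-_{j+1/2})-V_{j-1/2}g(\rho^-_{j-1/2})\big)$ with $V_{j+1/2}$, $\rho^-_{j+1/2}$ computed from that reconstruction. Let the time integration be an SSP method (in the sense below) with SSP constant $c_{SSP}>0$ and time step $\tau$ satisfying $$\tau\le c_{SSP}\,\frac{\gamma_R h}{\gamma_R h\,w_\eta(0)\|v'\|\|g\|+\|v\|\|g'\|}.$$ Then the fully discrete approximate cell averages satisfy $\rho_m\le\bar\rho_j(t^n)\le\rho_M$ for all $j\in\mathbb{Z}$ and all $t^n=n\tau$, $n\in\mathbb{N}$.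
   Context: Standing assumptions (A): $\rho_{\max}>0$, $\eta>0$; $g\in C^1([0,\rho_{\max}];\mathbb{R}_{\ge0})$ with $g'\ge0$; $v\in C^1([0,\rho_{\max}];\mathbb{R}_{\ge0})$ with $v'\le0$; $w_\eta\in C^1([0,\eta];\mathbb{R}_{\ge0})$ with $w_\eta'\le0$ and $\int_0^\eta w_\eta=1$. Norms $\|\cdot\|$ are sup norms on $[0,\rho_{\max}]$. Grid: $h>0$, $x_j=x_0+jh$, $I_j=[x_{j-1/2},x_{j+1/2}]$, $N\in\mathbb{N}$ with $Nh=\eta$. Quadrature: nodes $y_1,\dots,y_R\in[0,1]$ with $y_R=1$, weights $\gamma_\nu>0$, $\sum\gamma_\nu=1$; $w_\eta^{\nu,k}=w_\eta((k+y_\nu)h)$ with $h\sum_{k=0}^{N-1}\sum_\nu\gamma_\nu w_\eta^{\nu,k}=1$. Property (R): whenever all cell averages $\bar\rho_l$ lie in $[\rho_m,\rho_M]$, the reconstruction provides for each $l$ a polynomial $P_l$ on $I_l$ with $\frac1h\int_{I_l}P_l=\bar\rho_l$, for which the quadrature rule is exact, and whose values $\rho_l^\nu=P_l(x_{l-1/2}+y_\nu h)$ lie in $[\rho_m,\rho_M]$ (in the paper this is achieved by applying the Zhang–Shu linear scaling limiter $\tilde P_l=\bar\rho_l+\theta(P_l-\bar\rho_l)$ to CWENO reconstructions). Then $\rho^-_{j+1/2}=P_j(x_{j+1/2})=\rho_j^R$ and $V_{j+1/2}=v\big(h\sum_{k=0}^{N-1}\sum_\nu\gamma_\nu w_\eta^{\nu,k}\rho^\nu_{j+k+1}\big)$.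 SSP method with constant $c_{SSP}$: an explicit (multistage and/or multistep) method in which every new stage or step value is a convex combination of terms of the form $u+\tau\beta L(u)$, where $u$ is a previously computed stage/step value and $0\le\beta\le 1/c_{SSP}$ (equivalently, it is a convex combination of forward Euler steps with step sizes at most $\tau/c_{SSP}$). *)

theory Defs
  imports "HOL-Analysis.Analysis" "HOL-Computational_Algebra.Polynomial"
begin

definition supnorm :: "real \<Rightarrow> (real \<Rightarrow> real) \<Rightarrow> real" where
  "supnorm a f = (SUP x\<in>{0..a}. \<bar>f x\<bar>)"

text \<open>Cell interface x_{j-1/2} = x0 + (j - 1/2) h.\<close>
definition xl :: "real \<Rightarrow> real \<Rightarrow> int \<Rightarrow> real" where
  "xl x0 h j = x0 + (real_of_int j - 1/2) * h"

text \<open>Reconstruction: rec rb l is the polynomial P_l built from the cell averages rb.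
  Node values rho_l^nu = P_l(x_{l-1/2} + y_nu h).\<close>
definition nodeval :: "((int \<Rightarrow> real) \<Rightarrow> int \<Rightarrow> real poly) \<Rightarrow> real \<Rightarrow> real \<Rightarrow> (nat \<Rightarrow> real)
    \<Rightarrow> (int \<Rightarrow> real) \<Rightarrow> int \<Rightarrow> nat \<Rightarrow> real" where
  "nodeval rec x0 h y rb l \<nu> = poly (rec rb l) (xl x0 h l + y \<nu> * h)"

definition rhominus :: "((int \<Rightarrow> real) \<Rightarrow> int \<Rightarrow> real poly) \<Rightarrow> real \<Rightarrow> real
    \<Rightarrow> (int \<Rightarrow> real) \<Rightarrow> int \<Rightarrow> real" where
  "rhominus rec x0 h rb j = poly (rec rb j) (xl x0 h (j + 1))"

definition Vface :: "(real \<Rightarrow> real) \<Rightarrow> (real \<Rightarrow> real) \<Rightarrow> nat \<Rightarrow> nat \<Rightarrow> (nat \<Rightarrow> real)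
    \<Rightarrow> (nat \<Rightarrow> real) \<Rightarrow> ((int \<Rightarrow> real) \<Rightarrow> int \<Rightarrow> real poly) \<Rightarrow> real \<Rightarrow> real
    \<Rightarrow> (int \<Rightarrow> real) \<Rightarrow> int \<Rightarrow> real" where
  "Vface v w N R y \<gamma> rec x0 h rb j =
     v (h * (\<Sum>k<N. \<Sum>\<nu>=1..R. \<gamma> \<nu> * w ((real k + y \<nu>) * h)
                   * nodeval rec x0 h y rb (j + int k + 1) \<nu>))"

definition Lop :: "(real \<Rightarrow> real) \<Rightarrow> (real \<Rightarrow> real) \<Rightarrow> (real \<Rightarrow> real) \<Rightarrow> nat \<Rightarrow> nat
    \<Rightarrow> (nat \<Rightarrow> real) \<Rightarrow> (nat \<Rightarrow> real) \<Rightarrow> ((int \<Rightarrow> real) \<Rightarrow> int \<Rightarrow> real poly) \<Rightarrow> real \<Rightarrow> real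
    \<Rightarrow> (int \<Rightarrow> real) \<Rightarrow> int \<Rightarrow> real" where
  "Lop g v w N R y \<gamma> rec x0 h rb j =
     - (1 / h) * (Vface v w N R y \<gamma> rec x0 h rb j * g (rhominus rec x0 h rb j)
                 - Vface v w N R y \<gamma> rec x0 h rb (j - 1) * g (rhominus rec x0 h rb (j - 1)))"

definition propR :: "((int \<Rightarrow> real) \<Rightarrow> int \<Rightarrow> real poly) \<Rightarrow> real \<Rightarrow> real \<Rightarrow> nat
    \<Rightarrow> (nat \<Rightarrow> real) \<Rightarrow> (nat \<Rightarrow> real) \<Rightarrow> real \<Rightarrow> real \<Rightarrow> bool" where
  "propR rec x0 h R y \<gamma> rm rM \<longleftrightarrow>
     (\<forall>rb. (\<forall>l. rm \<le> rb l \<and> rb l \<le> rM) \<longrightarrow>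
        (\<forall>l. integral {xl x0 h l .. xl x0 h (l + 1)} (poly (rec rb l)) / h = rb l
           \<and> integral {xl x0 h l .. xl x0 h (l + 1)} (poly (rec rb l)) / h
               = (\<Sum>\<nu>=1..R. \<gamma> \<nu> * poly (rec rb l) (xl x0 h l + y \<nu> * h))
           \<and> (\<forall>\<nu>\<in>{1..R}. rm \<le> nodeval rec x0 h y rb l \<nu> \<and> nodeval rec x0 h y rb l \<nu> \<le> rM)))"

text \<open>z enumerates all values computed by an explicit SSP method (stages and steps, in order
  of computation), z 0 being the initial data: every new value is a convex combination of
  forward-Euler terms u + tau beta L(u) with u previously computed and 0 <= beta <= 1/c.\<close>
definition ssp_run :: "((int \<Rightarrow> real) \<Rightarrow> int \<Rightarrow> real) \<Rightarrow> real \<Rightarrow> real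
    \<Rightarrow> (nat \<Rightarrow> int \<Rightarrow> real) \<Rightarrow> bool" where
  "ssp_run L c \<tau> z \<longleftrightarrow>
     (\<forall>m>0. \<exists>K (\<alpha>::nat \<Rightarrow> real) (\<beta>::nat \<Rightarrow> real) (p::nat \<Rightarrow> nat).
        (\<forall>k<K. 0 \<le> \<alpha> k \<and> 0 \<le> \<beta> k \<and> \<beta> k \<le> 1 / c \<and> p k < m)
        \<and> (\<Sum>k<K. \<alpha> k) = 1
        \<and> z m = (\<lambda>j. \<Sum>k<K. \<alpha> k * (z (p k) j + \<tau> * \<beta> k * L (z (p k)) j)))"

end

theory Submission
  imports Defs
begin


lemma tele_aux:
  fixes W r :: "nat \<Rightarrow> real"
  assumes "n \<ge> 1" "\<forall>k. k + 1 < n \<longrightarrow> W (Suc k) \<le> W k" "\<forall>k<n. W k \<ge> 0"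
    "\<forall>k. 1 \<le> k \<longrightarrow> k \<le> n \<longrightarrow> r k \<le> B"
  shows "(\<Sum>k<n. W k * (r (Suc k) - r k)) \<le> W (n - 1) * r n - W 0 * r 0 + (W 0 - W (n - 1)) * B"
  using assms
proof (induction n)
  case 0 then show ?case by simp
next
  case (Suc n)
  show ?case
  proof (cases "n = 0")
    case True then show ?thesis by (simp add: algebra_simps)
  next
    case False
    then have IH: "(\<Sum>k<n. W k * (r (Suc k) - r k)) \<le> W (n - 1) * r n - W 0 * r 0 + (W 0 - W (n - 1)) * B"
      using Suc by auto
    have m: "W n \<le> W (n - 1)" using Suc.prems(2) False
      by (metis Suc_pred' add.commute lessI not_gr0 plus_1_eq_Suc)
    have rn: "r n \<le> B" using Suc.prems(4) False by auto
    have "(W (n - 1) - W n) * (r n - B) \<le> 0"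
      using m rn by (simp add: mult_nonneg_nonpos)
    then show ?thesis using IH by (simp add: algebra_simps)
  qed
qed

lemma tele:
  fixes W r :: "nat \<Rightarrow> real"
  assumes "n \<ge> 1" "\<forall>k. k + 1 < n \<longrightarrow> W (Suc k) \<le> W k" "\<forall>k<n. W k \<ge> 0"
    "\<forall>k. 1 \<le> k \<longrightarrow> k \<le> n \<longrightarrow> r k \<le> B"
  shows "(\<Sum>k<n. W k * (r (Suc k) - r k)) \<le> W 0 * (B - r 0)"
proof -
  have "W (n - 1) * r n \<le> W (n - 1) * B"
    using assms by (intro mult_left_mono) auto
  then show ?thesis using tele_aux[OF assms] by (simp add: algebra_simps)
qed

lemma supnorm_ge:
  assumes "continuous_on {0..M} f" "x \<in> {0..M}"
  shows "\<bar>f x\<bar> \<le> supnorm M f"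
proof -
  have "bounded ((\<lambda>x. \<bar>f x\<bar>) ` {0..M})"
    by (intro compact_imp_bounded compact_continuous_image continuous_on_rabs assms) simp
  then have "bdd_above ((\<lambda>x. \<bar>f x\<bar>) ` {0..M})" by (rule bounded_imp_bdd_above)
  then show ?thesis unfolding supnorm_def using assms(2) by (rule cSUP_upper2) simp
qed

lemma mvt_h:
  fixes f f' :: "real \<Rightarrow> real"
  assumes "\<forall>x\<in>{0..M}. (f has_real_derivative f' x) (at x within {0..M})" "0 \<le> a" "a \<le> b" "b \<le> M"
  shows "\<exists>\<xi>\<in>{a..b}. f b - f a = f' \<xi> * (b - a)"
proof -
  have "\<And>x. a \<le> x \<Longrightarrow> x \<le> b \<Longrightarrow> (f has_derivative (\<lambda>t. f' x * t)) (at x within {a..b})"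
  proof -
    fix x assume "a \<le> x" "x \<le> b"
    then have "(f has_derivative (*) (f' x)) (at x within {0..M})"
      using assms by (auto simp: has_field_derivative_def)
    then show "(f has_derivative (\<lambda>t. f' x * t)) (at x within {a..b})"
      by (rule has_derivative_subset) (use assms in auto)
  qed
  from mvt_very_simple[OF assms(3) this] show ?thesis by auto
qed

lemma cont_of_deriv:
  fixes f f' :: "real \<Rightarrow> real"
  assumes "\<forall>x\<in>{0..M}. (f has_real_derivative f' x) (at x within {0..M})"
  shows "continuous_on {0..M} f"
  using assms by (meson DERIV_continuous continuous_on_eq_continuous_within)



lemma fe_step:
  fixes u :: "int \<Rightarrow> real" and rec :: "(int \<Rightarrow> real) \<Rightarrow> int \<Rightarrow> real poly"
    and g v w :: "real \<Rightarrow> real" and y \<gamma> :: "nat \<Rightarrow> real"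
  assumes recR: "propR rec x0 h R y \<gamma> rm rM"
   and ub: "\<forall>l. rm \<le> u l \<and> u l \<le> rM"
   and R_pos: "R \<ge> 1" and y_R: "y R = 1"
   and y_range: "\<forall>\<nu>\<in>{1..R}. 0 \<le> y \<nu> \<and> y \<nu> \<le> 1"
   and \<gamma>_pos: "\<forall>\<nu>\<in>{1..R}. \<gamma> \<nu> > 0" and \<gamma>_sum: "(\<Sum>\<nu>=1..R. \<gamma> \<nu>) = 1"
   and h_pos: "h > 0" and N1: "N \<ge> 1" and Nh: "real N * h = \<eta>"
   and w_nonneg: "\<forall>x\<in>{0..\<eta>}. w x \<ge> 0"
   and w_mono: "\<forall>a b. 0 \<le> a \<longrightarrow> a \<le> b \<longrightarrow> b \<le> \<eta> \<longrightarrow> w b \<le> w a"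
   and w_discrete: "h * (\<Sum>k<N. \<Sum>\<nu>=1..R. \<gamma> \<nu> * w ((real k + y \<nu>) * h)) = 1"
   and rm0: "0 \<le> rm" and rMmax: "rM \<le> rmax"
   and g_mono: "\<forall>a b. 0 \<le> a \<longrightarrow> a \<le> b \<longrightarrow> b \<le> rmax \<longrightarrow> 0 \<le> g b - g a \<and> g b - g a \<le> Gd * (b - a)"
   and g_rng: "\<forall>x\<in>{0..rmax}. 0 \<le> g x \<and> g x \<le> G"
   and v_mono: "\<forall>a b. 0 \<le> a \<longrightarrow> a \<le> b \<longrightarrow> b \<le> rmax \<longrightarrow> 0 \<le> v a - v b \<and> v a - v b \<le> Vd * (b - a)"
   and v_rng: "\<forall>x\<in>{0..rmax}. 0 \<le> v x \<and> v x \<le> Vn"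
   and nn: "0 \<le> G" "0 \<le> Gd" "0 \<le> Vd" "0 \<le> Vn"
   and lam: "0 \<le> lam" "lam * (\<gamma> R * h * w 0 * Vd * G + Vn * Gd) \<le> \<gamma> R * h"
  shows "rm \<le> u j + lam * Lop g v w N R y \<gamma> rec x0 h u j \<and> u j + lam * Lop g v w N R y \<gamma> rec x0 h u j \<le> rM"
proof -
  define \<rho> where "\<rho> = nodeval rec x0 h y u"
  have P: "\<forall>l. u l = (\<Sum>\<nu>=1..R. \<gamma> \<nu> * \<rho> l \<nu>) \<and> (\<forall>\<nu>\<in>{1..R}. rm \<le> \<rho> l \<nu> \<and> \<rho> l \<nu> \<le> rM)"
    using recR ub unfolding propR_def \<rho>_def nodeval_def by metis
  have rhom: "\<forall>l. rhominus rec x0 h u l = \<rho> l R"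
    unfolding rhominus_def \<rho>_def nodeval_def xl_def using y_R by (simp add: algebra_simps)
  define W where "W \<nu> k = w ((real k + y \<nu>) * h)" for \<nu> k
  define A where "A l = h * (\<Sum>k<N. \<Sum>\<nu>=1..R. \<gamma> \<nu> * W \<nu> k * \<rho> (l + int k + 1) \<nu>)" for l
  have V: "\<forall>l. Vface v w N R y \<gamma> rec x0 h u l = v (A l)"
    unfolding Vface_def A_def W_def \<rho>_def by simp
  have Wnn: "\<forall>\<nu>\<in>{1..R}. \<forall>k<N. 0 \<le> W \<nu> k"
  proof (intro ballI allI impI)
    fix \<nu> k assume "\<nu> \<in> {1..R}" "k < N"
    then have "0 \<le> y \<nu>" "y \<nu> \<le> 1" "real k + 1 \<le> real N" using y_range by auto
    then have "(real k + y \<nu>) * h \<le> real N * h" "0 \<le> (real k + y \<nu>) * h"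
      using h_pos by (auto intro!: mult_right_mono mult_nonneg_nonneg)
    then show "0 \<le> W \<nu> k" unfolding W_def using w_nonneg Nh by auto
  qed
  have Wmono: "\<forall>\<nu>\<in>{1..R}. \<forall>k. k + 1 < N \<longrightarrow> W \<nu> (Suc k) \<le> W \<nu> k"
  proof (intro ballI allI impI)
    fix \<nu> k assume "\<nu> \<in> {1..R}" "k + 1 < N"
    then have "0 \<le> y \<nu>" "y \<nu> \<le> 1" "real k + 2 \<le> real N" using y_range by auto
    then have "(real (Suc k) + y \<nu>) * h \<le> real N * h" "0 \<le> (real k + y \<nu>) * h"
      "(real k + y \<nu>) * h \<le> (real (Suc k) + y \<nu>) * h"
      using h_pos by (auto intro!: mult_right_mono mult_nonneg_nonneg)
    then show "W \<nu> (Suc k) \<le> W \<nu> k" unfolding W_def using w_mono Nh by auto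
  qed
  have W0: "\<forall>\<nu>\<in>{1..R}. W \<nu> 0 \<le> w 0"
  proof
    fix \<nu> assume "\<nu> \<in> {1..R}"
    then have y1: "0 \<le> y \<nu>" "y \<nu> \<le> 1" using y_range by auto
    have "y \<nu> * h \<le> 1 * h" using y1 h_pos by (intro mult_right_mono) auto
    also have "1 * h \<le> real N * h" using N1 h_pos by (intro mult_right_mono) auto
    finally have "0 \<le> y \<nu> * h" "y \<nu> * h \<le> \<eta>" using Nh y1 h_pos by auto
    then show "W \<nu> 0 \<le> w 0" unfolding W_def using w_mono by auto
  qed
  have gnn: "\<forall>\<nu>\<in>{1..R}. 0 \<le> \<gamma> \<nu>" using \<gamma>_pos by (auto intro: less_imp_le)
  have wd: "h * (\<Sum>k<N. \<Sum>\<nu>=1..R. \<gamma> \<nu> * W \<nu> k) = 1" using w_discrete by (simp add: W_def)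
  have Arng: "rm \<le> A l \<and> A l \<le> rM" for l
  proof
    have "(\<Sum>k<N. \<Sum>\<nu>=1..R. \<gamma> \<nu> * W \<nu> k * \<rho> (l + int k + 1) \<nu>) \<le> (\<Sum>k<N. \<Sum>\<nu>=1..R. \<gamma> \<nu> * W \<nu> k * rM)"
      using P Wnn gnn by (intro sum_mono mult_left_mono) (auto intro!: mult_nonneg_nonneg)
    also have "\<dots> = rM * (\<Sum>k<N. \<Sum>\<nu>=1..R. \<gamma> \<nu> * W \<nu> k)" by (simp add: sum_distrib_left mult_ac)
    finally have "A l \<le> h * (rM * (\<Sum>k<N. \<Sum>\<nu>=1..R. \<gamma> \<nu> * W \<nu> k))" unfolding A_def using h_pos
      by (intro mult_left_mono) auto
    also have "\<dots> = rM * (h * (\<Sum>k<N. \<Sum>\<nu>=1..R. \<gamma> \<nu> * W \<nu> k))" by (simp only: mult.left_commute)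
    finally show "A l \<le> rM" unfolding wd by simp
    have "(\<Sum>k<N. \<Sum>\<nu>=1..R. \<gamma> \<nu> * W \<nu> k * rm) \<le> (\<Sum>k<N. \<Sum>\<nu>=1..R. \<gamma> \<nu> * W \<nu> k * \<rho> (l + int k + 1) \<nu>)"
      using P Wnn gnn by (intro sum_mono mult_left_mono) (auto intro!: mult_nonneg_nonneg)
    moreover have "(\<Sum>k<N. \<Sum>\<nu>=1..R. \<gamma> \<nu> * W \<nu> k * rm) = rm * (\<Sum>k<N. \<Sum>\<nu>=1..R. \<gamma> \<nu> * W \<nu> k)" by (simp add: sum_distrib_left mult_ac)
    ultimately have "h * (rm * (\<Sum>k<N. \<Sum>\<nu>=1..R. \<gamma> \<nu> * W \<nu> k)) \<le> A l" unfolding A_def using h_pos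
      by (intro mult_left_mono) auto
    moreover have "h * (rm * (\<Sum>k<N. \<Sum>\<nu>=1..R. \<gamma> \<nu> * W \<nu> k)) = rm * (h * (\<Sum>k<N. \<Sum>\<nu>=1..R. \<gamma> \<nu> * W \<nu> k))" by (simp only: mult.left_commute)
    moreover have "rm * (h * (\<Sum>k<N. \<Sum>\<nu>=1..R. \<gamma> \<nu> * W \<nu> k)) = rm" unfolding wd by simp
    ultimately show "rm \<le> A l" by linarith
  qed
  have Dif: "A j - A (j - 1) = h * (\<Sum>\<nu>=1..R. \<gamma> \<nu> * (\<Sum>k<N. W \<nu> k * (\<rho> (j + int (Suc k)) \<nu> - \<rho> (j + int k) \<nu>)))"
  proof -
    have e1: "\<rho> (j + int k + 1) = \<rho> (j + int (Suc k))" "\<rho> (j - 1 + int k + 1) = \<rho> (j + int k)" for k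
      by (simp_all add: algebra_simps)
    have "A j - A (j - 1) = h * ((\<Sum>k<N. \<Sum>\<nu>=1..R. \<gamma> \<nu> * W \<nu> k * \<rho> (j + int (Suc k)) \<nu>) - (\<Sum>k<N. \<Sum>\<nu>=1..R. \<gamma> \<nu> * W \<nu> k * \<rho> (j + int k) \<nu>))"
      unfolding A_def e1 by (simp add: right_diff_distrib)
    also have "\<dots> = h * (\<Sum>k<N. \<Sum>\<nu>=1..R. \<gamma> \<nu> * (W \<nu> k * (\<rho> (j + int (Suc k)) \<nu> - \<rho> (j + int k) \<nu>)))"
      by (simp add: sum_subtractf[symmetric] right_diff_distrib mult_ac)
    also have "\<dots> = h * (\<Sum>\<nu>=1..R. \<gamma> \<nu> * (\<Sum>k<N. W \<nu> k * (\<rho> (j + int (Suc k)) \<nu> - \<rho> (j + int k) \<nu>)))"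
      by (simp add: sum.swap[of _ "{..<N}"] sum_distrib_left)
    finally show ?thesis .
  qed
  have SU: "(\<Sum>k<N. W \<nu> k * (\<rho> (j + int (Suc k)) \<nu> - \<rho> (j + int k) \<nu>)) \<le> w 0 * (rM - \<rho> j \<nu>)" if "\<nu> \<in> {1..R}" for \<nu>
  proof -
    have "(\<Sum>k<N. W \<nu> k * ((\<lambda>k. \<rho> (j + int k) \<nu>) (Suc k) - (\<lambda>k. \<rho> (j + int k) \<nu>) k)) \<le> W \<nu> 0 * (rM - (\<lambda>k. \<rho> (j + int k) \<nu>) 0)"
      using that P Wnn Wmono N1 by (intro tele) auto
    also have "\<dots> \<le> w 0 * (rM - \<rho> j \<nu>)" unfolding of_nat_0 add_0_right using W0 that P by (intro mult_right_mono) auto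
    finally show ?thesis by simp
  qed
  have SL: "- (w 0 * (\<rho> j \<nu> - rm)) \<le> (\<Sum>k<N. W \<nu> k * (\<rho> (j + int (Suc k)) \<nu> - \<rho> (j + int k) \<nu>))" if "\<nu> \<in> {1..R}" for \<nu>
  proof -
    have "(\<Sum>k<N. W \<nu> k * ((\<lambda>k. - \<rho> (j + int k) \<nu>) (Suc k) - (\<lambda>k. - \<rho> (j + int k) \<nu>) k)) \<le> W \<nu> 0 * (- rm - (\<lambda>k. - \<rho> (j + int k) \<nu>) 0)"
      using that P Wnn Wmono N1 by (intro tele) auto
    also have "\<dots> = W \<nu> 0 * (\<rho> j \<nu> - rm)" by simp
    also have "\<dots> \<le> w 0 * (\<rho> j \<nu> - rm)" using W0 that P by (intro mult_right_mono) auto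
    finally have "(\<Sum>k<N. - (W \<nu> k * (\<rho> (j + int (Suc k)) \<nu> - \<rho> (j + int k) \<nu>))) \<le> w 0 * (\<rho> j \<nu> - rm)"
      by (simp add: algebra_simps)
    then show ?thesis by (simp add: sum_negf)
  qed
  have uj: "u j = (\<Sum>\<nu>=1..R. \<gamma> \<nu> * \<rho> j \<nu>)" using P by auto
  have DU: "A j - A (j - 1) \<le> h * w 0 * (rM - u j)"
  proof -
    have "(\<Sum>\<nu>=1..R. \<gamma> \<nu> * (\<Sum>k<N. W \<nu> k * (\<rho> (j + int (Suc k)) \<nu> - \<rho> (j + int k) \<nu>))) \<le> (\<Sum>\<nu>=1..R. \<gamma> \<nu> * (w 0 * (rM - \<rho> j \<nu>)))"
      using SU gnn by (intro sum_mono mult_left_mono) auto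
    also have "\<dots> = w 0 * (rM * (\<Sum>\<nu>=1..R. \<gamma> \<nu>) - u j)"
      unfolding uj by (simp add: sum_distrib_left sum_subtractf right_diff_distrib mult_ac)
    finally have "(\<Sum>\<nu>=1..R. \<gamma> \<nu> * (\<Sum>k<N. W \<nu> k * (\<rho> (j + int (Suc k)) \<nu> - \<rho> (j + int k) \<nu>))) \<le> w 0 * (rM - u j)"
      using \<gamma>_sum by simp
    then show ?thesis unfolding Dif using h_pos by (simp add: mult.assoc)
  qed
  have DL: "A (j - 1) - A j \<le> h * w 0 * (u j - rm)"
  proof -
    have "(\<Sum>\<nu>=1..R. \<gamma> \<nu> * (- (w 0 * (\<rho> j \<nu> - rm)))) \<le> (\<Sum>\<nu>=1..R. \<gamma> \<nu> * (\<Sum>k<N. W \<nu> k * (\<rho> (j + int (Suc k)) \<nu> - \<rho> (j + int k) \<nu>)))"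
      using SL gnn by (intro sum_mono mult_left_mono) auto
    moreover have "(\<Sum>\<nu>=1..R. \<gamma> \<nu> * (- (w 0 * (\<rho> j \<nu> - rm)))) = - (w 0 * (u j - rm * (\<Sum>\<nu>=1..R. \<gamma> \<nu>)))"
      unfolding uj by (simp add: sum_distrib_left sum_subtractf right_diff_distrib mult_ac sum_negf)
    ultimately have "- (w 0 * (u j - rm)) \<le> (\<Sum>\<nu>=1..R. \<gamma> \<nu> * (\<Sum>k<N. W \<nu> k * (\<rho> (j + int (Suc k)) \<nu> - \<rho> (j + int k) \<nu>)))"
      using \<gamma>_sum by simp
    then have "h * (- (w 0 * (u j - rm))) \<le> h * (\<Sum>\<nu>=1..R. \<gamma> \<nu> * (\<Sum>k<N. W \<nu> k * (\<rho> (j + int (Suc k)) \<nu> - \<rho> (j + int k) \<nu>)))"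
      using h_pos by (intro mult_left_mono) auto
    then have "h * (- (w 0 * (u j - rm))) \<le> A j - A (j - 1)" unfolding Dif .
    then show ?thesis by (simp add: algebra_simps)
  qed
  have GU: "\<gamma> R * (rM - \<rho> j R) \<le> rM - u j"
  proof -
    have "(\<Sum>\<nu>=1..R. \<gamma> \<nu> * (rM - \<rho> j \<nu>)) = rM * (\<Sum>\<nu>=1..R. \<gamma> \<nu>) - (\<Sum>\<nu>=1..R. \<gamma> \<nu> * \<rho> j \<nu>)"
      by (simp add: sum_distrib_left sum_subtractf right_diff_distrib mult_ac)
    then have "rM - u j = (\<Sum>\<nu>=1..R. \<gamma> \<nu> * (rM - \<rho> j \<nu>))"
      unfolding uj \<gamma>_sum by simp
    moreover have "\<gamma> R * (rM - \<rho> j R) \<le> (\<Sum>\<nu>=1..R. \<gamma> \<nu> * (rM - \<rho> j \<nu>))"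
      using R_pos P gnn by (intro member_le_sum) (auto intro!: mult_nonneg_nonneg)
    ultimately show ?thesis by simp
  qed
  have GL: "\<gamma> R * (\<rho> j R - rm) \<le> u j - rm"
  proof -
    have "(\<Sum>\<nu>=1..R. \<gamma> \<nu> * (\<rho> j \<nu> - rm)) = (\<Sum>\<nu>=1..R. \<gamma> \<nu> * \<rho> j \<nu>) - rm * (\<Sum>\<nu>=1..R. \<gamma> \<nu>)"
      by (simp add: sum_distrib_left sum_subtractf right_diff_distrib mult_ac)
    then have "u j - rm = (\<Sum>\<nu>=1..R. \<gamma> \<nu> * (\<rho> j \<nu> - rm))"
      unfolding uj \<gamma>_sum by simp
    moreover have "\<gamma> R * (\<rho> j R - rm) \<le> (\<Sum>\<nu>=1..R. \<gamma> \<nu> * (\<rho> j \<nu> - rm))"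
      using R_pos P gnn by (intro member_le_sum) (auto intro!: mult_nonneg_nonneg)
    ultimately show ?thesis by simp
  qed
  define a where "a = \<rho> (j - 1) R"
  define b where "b = \<rho> j R"
  define Vp where "Vp = v (A j)"
  define Vm where "Vm = v (A (j - 1))"
  have R1: "R \<in> {1..R}" using R_pos by auto
  have ab: "rm \<le> a" "a \<le> rM" "rm \<le> b" "b \<le> rM" unfolding a_def b_def using P R1 by blast+
  have Lj: "Lop g v w N R y \<gamma> rec x0 h u j = -(1/h) * (Vp * g b - Vm * g a)"
    unfolding Lop_def a_def b_def Vp_def Vm_def using V rhom by simp
  have new: "u j + lam * Lop g v w N R y \<gamma> rec x0 h u j = u j + (lam / h) * (Vp * (g a - g b) + g a * (Vm - Vp))"
    unfolding Lj by (simp add: algebra_simps)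
  have ga: "0 \<le> g a" "g a \<le> G" using g_rng ab rm0 rMmax by auto
  have Vpr: "0 \<le> Vp" "Vp \<le> Vn" unfolding Vp_def using v_rng Arng[of j] rm0 rMmax by auto
  have Ajr: "0 \<le> A j" "A j \<le> rmax" "0 \<le> A (j - 1)" "A (j - 1) \<le> rmax"
    using Arng[of j] Arng[of "j-1"] rm0 rMmax by auto
  have hw0: "0 \<le> w 0" using w_nonneg Nh h_pos N1 by auto
  have lamh: "0 \<le> lam / h" using lam h_pos by simp
  have key: "lam * (Vn * Gd * T + G * Vd * (h * w 0 * D)) \<le> h * D"
    if T: "0 \<le> T" "\<gamma> R * T \<le> D" for T D
  proof -
    have gR: "\<gamma> R > 0" using \<gamma>_pos R1 by blast
    have D0: "0 \<le> D" using T gR mult_nonneg_nonneg[of "\<gamma> R" T] by linarith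
    have "\<gamma> R * (lam * (Vn * Gd * T + G * Vd * (h * w 0 * D))) = lam * (Vn * Gd * (\<gamma> R * T) + \<gamma> R * G * Vd * h * w 0 * D)"
      by (simp add: algebra_simps)
    also have "\<dots> \<le> lam * (Vn * Gd * D + \<gamma> R * G * Vd * h * w 0 * D)"
      using T nn lam by (intro mult_left_mono add_right_mono) auto
    also have "\<dots> = D * (lam * (\<gamma> R * h * w 0 * Vd * G + Vn * Gd))" by (simp add: algebra_simps)
    also have "\<dots> \<le> D * (\<gamma> R * h)" using D0 lam by (intro mult_left_mono) auto
    also have "\<dots> = \<gamma> R * (h * D)" by simp
    finally show ?thesis using gR by simp
  qed
  show ?thesis
  proof
    define E where "E = u j - rm"
    have X: "- (Vn * Gd * (b - rm)) \<le> Vp * (g a - g b)"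
    proof (cases "b \<le> a")
      case True
      then have "0 \<le> g a - g b" using g_mono ab rm0 rMmax by auto
      then have "0 \<le> Vp * (g a - g b)" using Vpr by simp
      moreover have "0 \<le> Vn * Gd * (b - rm)" using nn ab by simp
      ultimately show ?thesis by linarith
    next
      case False
      then have "g b - g a \<le> Gd * (b - a)" using g_mono ab rm0 rMmax by auto
      also have "\<dots> \<le> Gd * (b - rm)" using ab nn by (intro mult_left_mono) auto
      finally have "g b - g a \<le> Gd * (b - rm)" .
      moreover have "0 \<le> g b - g a" using g_mono ab rm0 rMmax False by auto
      ultimately have "Vp * (g b - g a) \<le> Vn * (Gd * (b - rm))"
        using Vpr nn by (intro mult_mono) auto
      then show ?thesis by (simp add: algebra_simps)
    qed
    have Y: "- (G * Vd * (h * w 0 * E)) \<le> g a * (Vm - Vp)"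
    proof (cases "A (j - 1) \<le> A j")
      case True
      then have "0 \<le> Vm - Vp" unfolding Vm_def Vp_def using v_mono Ajr by auto
      moreover have "0 \<le> G * Vd * (h * w 0 * E)"
        using nn h_pos hw0 ub unfolding E_def by (intro mult_nonneg_nonneg) auto
      ultimately show ?thesis using ga mult_nonneg_nonneg[of "g a" "Vm - Vp"] by linarith
    next
      case False
      then have "Vp - Vm \<le> Vd * (A (j - 1) - A j)" "0 \<le> Vp - Vm"
        unfolding Vm_def Vp_def using v_mono Ajr by auto
      moreover have "Vd * (A (j - 1) - A j) \<le> Vd * (h * w 0 * E)"
        using DL nn unfolding E_def by (intro mult_left_mono) auto
      ultimately have "g a * (Vp - Vm) \<le> G * (Vd * (h * w 0 * E))"
        using ga nn by (intro mult_mono) auto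
      then show ?thesis by (simp add: algebra_simps)
    qed
    have "lam * (Vn * Gd * (b - rm) + G * Vd * (h * w 0 * E)) \<le> h * E"
      using GL ab unfolding E_def b_def by (intro key) auto
    then have "- (lam / h) * (Vn * Gd * (b - rm) + G * Vd * (h * w 0 * E)) \<ge> - E"
      using h_pos by (simp add: field_simps)
    moreover have "(lam / h) * (- (Vn * Gd * (b - rm)) + - (G * Vd * (h * w 0 * E))) \<le> (lam / h) * (Vp * (g a - g b) + g a * (Vm - Vp))"
      using X Y lamh by (intro mult_left_mono add_mono) auto
    ultimately show "rm \<le> u j + lam * Lop g v w N R y \<gamma> rec x0 h u j"
      unfolding new E_def by (simp add: algebra_simps)
  next
    define D where "D = rM - u j"
    have X: "Vp * (g a - g b) \<le> Vn * Gd * (rM - b)"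
    proof (cases "a \<le> b")
      case True
      then have "0 \<le> g b - g a" using g_mono ab rm0 rMmax by auto
      then have "Vp * (g a - g b) \<le> 0" using Vpr by (simp add: mult_nonneg_nonpos)
      moreover have "0 \<le> Vn * Gd * (rM - b)" using nn ab by simp
      ultimately show ?thesis by linarith
    next
      case False
      then have "g a - g b \<le> Gd * (a - b)" using g_mono ab rm0 rMmax by auto
      also have "\<dots> \<le> Gd * (rM - b)" using ab nn by (intro mult_left_mono) auto
      finally have "g a - g b \<le> Gd * (rM - b)" .
      moreover have "0 \<le> g a - g b" using g_mono ab rm0 rMmax False by auto
      ultimately have "Vp * (g a - g b) \<le> Vn * (Gd * (rM - b))"
        using Vpr nn by (intro mult_mono) auto
      then show ?thesis by (simp add: algebra_simps)
    qed
    have Y: "g a * (Vm - Vp) \<le> G * Vd * (h * w 0 * D)"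
    proof (cases "A j \<le> A (j - 1)")
      case True
      then have "0 \<le> Vp - Vm" unfolding Vm_def Vp_def using v_mono Ajr by auto
      moreover have "0 \<le> G * Vd * (h * w 0 * D)"
        using nn h_pos hw0 ub unfolding D_def by (intro mult_nonneg_nonneg) auto
      ultimately show ?thesis using ga mult_nonneg_nonneg[of "g a" "Vp - Vm"] by (simp add: algebra_simps)
    next
      case False
      then have "Vm - Vp \<le> Vd * (A j - A (j - 1))" "0 \<le> Vm - Vp"
        unfolding Vm_def Vp_def using v_mono Ajr by auto
      moreover have "Vd * (A j - A (j - 1)) \<le> Vd * (h * w 0 * D)"
        using DU nn unfolding D_def by (intro mult_left_mono) auto
      ultimately have "g a * (Vm - Vp) \<le> G * (Vd * (h * w 0 * D))"
        using ga nn by (intro mult_mono) auto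
      then show ?thesis by (simp add: algebra_simps)
    qed
    have "lam * (Vn * Gd * (rM - b) + G * Vd * (h * w 0 * D)) \<le> h * D"
      using GU ab unfolding D_def b_def by (intro key) auto
    then have "(lam / h) * (Vn * Gd * (rM - b) + G * Vd * (h * w 0 * D)) \<le> D"
      using h_pos by (simp add: field_simps)
    moreover have "(lam / h) * (Vp * (g a - g b) + g a * (Vm - Vp)) \<le> (lam / h) * (Vn * Gd * (rM - b) + G * Vd * (h * w 0 * D))"
      using X Y lamh by (intro mult_left_mono add_mono) auto
    ultimately show "u j + lam * Lop g v w N R y \<gamma> rec x0 h u j \<le> rM"
      unfolding new D_def by (simp add: algebra_simps)
  qed
qed

theorem theorem3p2:
  fixes rmax \<eta> h x0 c \<tau> rm rM :: real
    and g gd v vd w wd \<rho>0 :: "real \<Rightarrow> real"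
    and N R :: nat
    and y \<gamma> :: "nat \<Rightarrow> real"
    and rec :: "(int \<Rightarrow> real) \<Rightarrow> int \<Rightarrow> real poly"
    and z :: "nat \<Rightarrow> int \<Rightarrow> real"
    and s :: "nat \<Rightarrow> nat"
  assumes rmax_pos: "rmax > 0" and eta_pos: "\<eta> > 0"
    and g_deriv: "\<forall>x\<in>{0..rmax}. (g has_real_derivative gd x) (at x within {0..rmax})"
    and gd_cont: "continuous_on {0..rmax} gd"
    and g_nonneg: "\<forall>x\<in>{0..rmax}. g x \<ge> 0" and gd_nonneg: "\<forall>x\<in>{0..rmax}. gd x \<ge> 0"
    and v_deriv: "\<forall>x\<in>{0..rmax}. (v has_real_derivative vd x) (at x within {0..rmax})"
    and vd_cont: "continuous_on {0..rmax} vd"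
    and v_nonneg: "\<forall>x\<in>{0..rmax}. v x \<ge> 0" and vd_nonpos: "\<forall>x\<in>{0..rmax}. vd x \<le> 0"
    and w_deriv: "\<forall>x\<in>{0..\<eta>}. (w has_real_derivative wd x) (at x within {0..\<eta>})"
    and wd_cont: "continuous_on {0..\<eta>} wd"
    and w_nonneg: "\<forall>x\<in>{0..\<eta>}. w x \<ge> 0" and wd_nonpos: "\<forall>x\<in>{0..\<eta>}. wd x \<le> 0"
    and w_int: "integral {0..\<eta>} w = 1"
    and h_pos: "h > 0" and Nh: "real N * h = \<eta>"
    and R_pos: "R \<ge> 1"
    and y_range: "\<forall>\<nu>\<in>{1..R}. 0 \<le> y \<nu> \<and> y \<nu> \<le> 1" and y_R: "y R = 1"
    and \<gamma>_pos: "\<forall>\<nu>\<in>{1..R}. \<gamma> \<nu> > 0" and \<gamma>_sum: "(\<Sum>\<nu>=1..R. \<gamma> \<nu>) = 1"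
    and w_discrete: "h * (\<Sum>k<N. \<Sum>\<nu>=1..R. \<gamma> \<nu> * w ((real k + y \<nu>) * h)) = 1"
    and \<rho>0_range: "\<forall>x. 0 \<le> \<rho>0 x \<and> \<rho>0 x \<le> rmax"
    and rm_def: "rm = (INF x. \<rho>0 x)" and rM_def: "rM = (SUP x. \<rho>0 x)"
    and recR: "propR rec x0 h R y \<gamma> rm rM"
    and c_pos: "c > 0" and \<tau>_pos: "\<tau> > 0"
    and CFL: "\<tau> * (\<gamma> R * h * w 0 * supnorm rmax vd * supnorm rmax g
                  + supnorm rmax v * supnorm rmax gd) \<le> c * (\<gamma> R * h)"
    and ssp: "ssp_run (Lop g v w N R y \<gamma> rec x0 h) c \<tau> z"
    and init: "z 0 = (\<lambda>j. \<Sum>\<nu>=1..R. \<gamma> \<nu> * \<rho>0 (xl x0 h j + h * y \<nu>))"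
    and steps: "s 0 = 0" "strict_mono s"
  shows "\<forall>n j. rm \<le> z (s n) j \<and> z (s n) j \<le> rM"
proof -
  have bb: "bdd_below (range \<rho>0)" "bdd_above (range \<rho>0)" using \<rho>0_range
    by (auto intro!: bdd_belowI bdd_aboveI)
  have rho0b: "rm \<le> \<rho>0 x \<and> \<rho>0 x \<le> rM" for x
    unfolding rm_def rM_def using bb by (auto intro: cINF_lower cSUP_upper)
  have rm0: "0 \<le> rm" unfolding rm_def using \<rho>0_range by (auto intro: cINF_greatest)
  have rMmax: "rM \<le> rmax" unfolding rM_def using \<rho>0_range by (auto intro: cSUP_least)
  have N1: "N \<ge> 1" using Nh eta_pos h_pos by (cases N) auto
  have w_mono: "\<forall>a b. 0 \<le> a \<longrightarrow> a \<le> b \<longrightarrow> b \<le> \<eta> \<longrightarrow> w b \<le> w a"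
  proof (intro allI impI)
    fix a b assume ab: "0 \<le> a" "a \<le> b" "b \<le> \<eta>"
    then obtain \<xi> where "\<xi> \<in> {a..b}" "w b - w a = wd \<xi> * (b - a)" using mvt_h[OF w_deriv] by blast
    moreover have "wd \<xi> * (b - a) \<le> 0" using calculation(1) wd_nonpos ab
      by (intro mult_nonpos_nonneg) auto
    ultimately show "w b \<le> w a" by linarith
  qed
  define G where "G = supnorm rmax g"
  define Gd where "Gd = supnorm rmax gd"
  define Vn where "Vn = supnorm rmax v"
  define Vd where "Vd = supnorm rmax vd"
  have gc: "continuous_on {0..rmax} g" by (rule cont_of_deriv[OF g_deriv])
  have vc: "continuous_on {0..rmax} v" by (rule cont_of_deriv[OF v_deriv])
  have r0: "0 \<in> {0..rmax}" using rmax_pos by auto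
  have nn: "0 \<le> G" "0 \<le> Gd" "0 \<le> Vd" "0 \<le> Vn"
    unfolding G_def Gd_def Vn_def Vd_def
    using supnorm_ge[OF gc r0] supnorm_ge[OF gd_cont r0] supnorm_ge[OF vd_cont r0] supnorm_ge[OF vc r0]
    by linarith+
  have g_rng: "\<forall>x\<in>{0..rmax}. 0 \<le> g x \<and> g x \<le> G"
  proof
    fix x assume x: "x \<in> {0..rmax}"
    show "0 \<le> g x \<and> g x \<le> G" unfolding G_def using g_nonneg x supnorm_ge[OF gc x] by auto
  qed
  have v_rng: "\<forall>x\<in>{0..rmax}. 0 \<le> v x \<and> v x \<le> Vn"
  proof
    fix x assume x: "x \<in> {0..rmax}"
    show "0 \<le> v x \<and> v x \<le> Vn" unfolding Vn_def using v_nonneg x supnorm_ge[OF vc x] by auto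
  qed
  have g_mono: "\<forall>a b. 0 \<le> a \<longrightarrow> a \<le> b \<longrightarrow> b \<le> rmax \<longrightarrow> 0 \<le> g b - g a \<and> g b - g a \<le> Gd * (b - a)"
  proof (intro allI impI)
    fix a b assume ab: "0 \<le> a" "a \<le> b" "b \<le> rmax"
    then obtain \<xi> where \<xi>: "\<xi> \<in> {a..b}" "g b - g a = gd \<xi> * (b - a)" using mvt_h[OF g_deriv] by blast
    have x: "\<xi> \<in> {0..rmax}" using \<xi> ab by auto
    have "0 \<le> gd \<xi>" "gd \<xi> \<le> Gd" unfolding Gd_def using gd_nonneg x supnorm_ge[OF gd_cont x] by auto
    then show "0 \<le> g b - g a \<and> g b - g a \<le> Gd * (b - a)" unfolding \<xi>(2) using ab
      by (auto intro: mult_right_mono)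
  qed
  have v_mono: "\<forall>a b. 0 \<le> a \<longrightarrow> a \<le> b \<longrightarrow> b \<le> rmax \<longrightarrow> 0 \<le> v a - v b \<and> v a - v b \<le> Vd * (b - a)"
  proof (intro allI impI)
    fix a b assume ab: "0 \<le> a" "a \<le> b" "b \<le> rmax"
    then obtain \<xi> where \<xi>: "\<xi> \<in> {a..b}" "v b - v a = vd \<xi> * (b - a)" using mvt_h[OF v_deriv] by blast
    have x: "\<xi> \<in> {0..rmax}" using \<xi> ab by auto
    have e: "v a - v b = (- vd \<xi>) * (b - a)" using \<xi>(2) by (simp add: algebra_simps)
    have "0 \<le> - vd \<xi>" "- vd \<xi> \<le> Vd" unfolding Vd_def using vd_nonpos x supnorm_ge[OF vd_cont x] by auto
    then have "0 \<le> (- vd \<xi>) * (b - a)" "(- vd \<xi>) * (b - a) \<le> Vd * (b - a)"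
      using ab mult_nonneg_nonneg[of "- vd \<xi>" "b - a"] mult_right_mono[of "- vd \<xi>" Vd "b - a"] by auto
    then show "0 \<le> v a - v b \<and> v a - v b \<le> Vd * (b - a)" unfolding e by simp
  qed
  define S where "S = \<gamma> R * h * w 0 * Vd * G + Vn * Gd"
  have S0: "0 \<le> S"
  proof -
    have "0 \<le> \<gamma> R" using \<gamma>_pos R_pos by (auto intro: less_imp_le)
    moreover have "0 \<le> w 0" using w_nonneg eta_pos by auto
    ultimately show ?thesis unfolding S_def using nn h_pos by simp
  qed
  have CFL': "\<tau> * S \<le> c * (\<gamma> R * h)" using CFL unfolding S_def G_def Gd_def Vn_def Vd_def .
  have FE: "rm \<le> u j + (\<tau> * b) * Lop g v w N R y \<gamma> rec x0 h u j \<and> u j + (\<tau> * b) * Lop g v w N R y \<gamma> rec x0 h u j \<le> rM"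
    if ub: "\<forall>l. rm \<le> u l \<and> u l \<le> rM" and b: "0 \<le> b" "b \<le> 1 / c" for u j b
  proof -
    have "(\<tau> * b) * S \<le> (\<tau> * (1 / c)) * S" using b \<tau>_pos S0 by (intro mult_right_mono mult_left_mono) auto
    also have "\<dots> = (\<tau> * S) / c" by simp
    also have "\<dots> \<le> \<gamma> R * h" using CFL' c_pos by (simp add: divide_le_eq mult.commute)
    finally have lam: "(\<tau> * b) * (\<gamma> R * h * w 0 * Vd * G + Vn * Gd) \<le> \<gamma> R * h" unfolding S_def .
    show ?thesis
      by (rule fe_step[OF recR ub R_pos y_R y_range \<gamma>_pos \<gamma>_sum h_pos N1 Nh w_nonneg w_mono w_discrete
            rm0 rMmax g_mono g_rng v_mono v_rng nn _ lam]) (use \<tau>_pos b in simp)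
  qed
  have all: "\<forall>j. rm \<le> z m j \<and> z m j \<le> rM" for m
  proof (induction m rule: less_induct)
    case (less m)
    show ?case
    proof (cases "m = 0")
      case True
      show ?thesis
      proof
        fix j
        have gnn: "\<forall>\<nu>\<in>{1..R}. 0 \<le> \<gamma> \<nu>" using \<gamma>_pos by (auto intro: less_imp_le)
        have "(\<Sum>\<nu>=1..R. \<gamma> \<nu> * rm) \<le> (\<Sum>\<nu>=1..R. \<gamma> \<nu> * \<rho>0 (xl x0 h j + h * y \<nu>))"
          "(\<Sum>\<nu>=1..R. \<gamma> \<nu> * \<rho>0 (xl x0 h j + h * y \<nu>)) \<le> (\<Sum>\<nu>=1..R. \<gamma> \<nu> * rM)"
          using gnn rho0b by (auto intro!: sum_mono mult_left_mono)
        moreover have "(\<Sum>\<nu>=1..R. \<gamma> \<nu> * rm) = rm" "(\<Sum>\<nu>=1..R. \<gamma> \<nu> * rM) = rM"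
          using \<gamma>_sum by (simp_all add: sum_distrib_right[symmetric])
        ultimately show "rm \<le> z m j \<and> z m j \<le> rM" using True init by simp
      qed
    next
      case False
      then have m0: "m > 0" by simp
      have ex: "\<exists>K (\<alpha>::nat \<Rightarrow> real) (\<beta>::nat \<Rightarrow> real) (p::nat \<Rightarrow> nat).
        (\<forall>k<K. 0 \<le> \<alpha> k \<and> 0 \<le> \<beta> k \<and> \<beta> k \<le> 1 / c \<and> p k < m)
        \<and> (\<Sum>k<K. \<alpha> k) = 1
        \<and> z m = (\<lambda>j. \<Sum>k<K. \<alpha> k * (z (p k) j + \<tau> * \<beta> k * Lop g v w N R y \<gamma> rec x0 h (z (p k)) j))"
        using ssp m0 unfolding ssp_run_def by (elim allE impE) 
      from ex show ?thesis
      proof (elim exE conjE)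
      fix K \<alpha> \<beta> p assume K1: "\<forall>k<K. 0 \<le> \<alpha> k \<and> 0 \<le> \<beta> k \<and> \<beta> k \<le> 1 / c \<and> p k < m"
        and K2: "(\<Sum>k<K. \<alpha> k) = 1"
        and K3: "z m = (\<lambda>j. \<Sum>k<K. \<alpha> k * (z (p k) j + \<tau> * \<beta> k * Lop g v w N R y \<gamma> rec x0 h (z (p k)) j))"
      note K = K1 K2 K3
      show ?thesis
      proof
        fix j
        define F where "F k = z (p k) j + \<tau> * \<beta> k * Lop g v w N R y \<gamma> rec x0 h (z (p k)) j" for k
        have T: "rm \<le> F k \<and> F k \<le> rM" if "k < K" for k
        proof -
          have kk: "p k < m" "0 \<le> \<beta> k" "\<beta> k \<le> 1 / c" using K(1) that by auto
          show ?thesis unfolding F_def by (rule FE[OF less.IH[OF kk(1)] kk(2) kk(3)])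
        qed
        have zm: "z m j = (\<Sum>k<K. \<alpha> k * F k)" unfolding K(3) F_def by simp
        have a0: "0 \<le> \<alpha> k" if "k < K" for k using K(1) that by auto
        have "(\<Sum>k<K. \<alpha> k * rm) \<le> (\<Sum>k<K. \<alpha> k * F k)"
          by (rule sum_mono) (use T a0 in \<open>auto intro: mult_left_mono\<close>)
        moreover have "(\<Sum>k<K. \<alpha> k * F k) \<le> (\<Sum>k<K. \<alpha> k * rM)"
          by (rule sum_mono) (use T a0 in \<open>auto intro: mult_left_mono\<close>)
        moreover have "(\<Sum>k<K. \<alpha> k * rm) = rm" "(\<Sum>k<K. \<alpha> k * rM) = rM"
          using K(2) by (simp_all add: sum_distrib_right[symmetric])
        ultimately show "rm \<le> z m j \<and> z m j \<le> rM" unfolding zm by simp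
      qed
      qed
    qed
  qed
  then show ?thesis by blast
qed

end
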